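(* Let $(\mathfrak{A},\varphi,\tau)$ be an ergodic $*$-dynamical system, and let $A,B\in\mathfrak{A}$ and $\varepsilon>0$. Then the set $$E=\left\{k\in\mathbb{N}:\left|\varphi\left(A\tau^{k}(B)\right)\right|>\left|\varphi(A)\varphi(B)\right|-\varepsilon\right\}$$ is relatively dense in $\mathbb{N}=\{1,2,3,\dots\}$.
   Context: All algebras are over $\mathbb{C}$. A unital $*$-algebra is a complex algebra with an involution $*$ and a unit $1$. A state on a unital $*$-algebra $\mathfrak{A}$ is a linear functional $\varphi$ with $\varphi(A^*A)\ge 0$ for all $A$ and $\varphi(1)=1$. A $*$-dynamical system is a triple $(\mathfrak{A},\varphi,\tau)$ where $\mathfrak{A}$ is a unital $*$-algebra, $\varphi$ is a state on $\mathfrak{A}$, and $\tau:\mathfrak{A}\to\mathfrak{A}$ is a linear map (not necessarily multiplicative) with $\tau(1)=1$ and $\varphi(\tau(A)^*\tau(A))\le\varphi(A^*A)$ for all $A\in\mathfrak{A}$. Define the seminorm $\|A\|_\varphi=\sqrt{\varphi(A^*A)}$; scalars $\alpha\in\mathbb{C}$ are identified with $\alpha 1\in\mathfrak{A}$. The system is called ergodic if: for every sequence $(A_n)$ in $\mathfrak{A}$ such that $\|\tau(A_n)-A_n\|_\varphi\to0$ and such that for every $\varepsilon>0$ there is $N$ with $\|A_m-A_n\|_\varphi\le\varepsilon$ for all $m,n>N$, there exists $\alpha\in\mathbb{C}$ with $\|A_n-\alpha\|_\varphi\to0$. A set $E\subseteq\mathbb{N}$ is relatively dense in $\mathbb{N}$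 if there exists $n\in\mathbb{N}$ such that $E\cap\{j,j+1,\dots,j+n-1\}\neq\emptyset$ for every $j\in\mathbb{N}$. *)

theory Defs
  imports "HOL-Analysis.Analysis"
begin

text \<open>A unital *-algebra over the complex numbers is modelled as a type 'a of class
ring_1 (unit 1, multiplication, addition), together with a complex scalar
multiplication sc (making 'a a complex vector space, with multiplication bilinear)
and an involution st (conjugate-linear, anti-multiplicative, involutive).\<close>

definition unital_star_algebra ::
  "(complex \<Rightarrow> 'a::ring_1 \<Rightarrow> 'a) \<Rightarrow> ('a \<Rightarrow> 'a) \<Rightarrow> bool" where
  "unital_star_algebra sc st \<longleftrightarrow>
     Vector_Spaces.vector_space sc \<and>
     (\<forall>c a b. sc c (a * b) = sc c a * b) \<and>
     (\<forall>c a b. sc c (a * b) = a * sc c b) \<and>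
     (\<forall>a. st (st a) = a) \<and>
     (\<forall>a b. st (a + b) = st a + st b) \<and>
     (\<forall>c a. st (sc c a) = sc (cnj c) (st a)) \<and>
     (\<forall>a b. st (a * b) = st b * st a)"

definition is_state ::
  "(complex \<Rightarrow> 'a::ring_1 \<Rightarrow> 'a) \<Rightarrow> ('a \<Rightarrow> 'a) \<Rightarrow> ('a \<Rightarrow> complex) \<Rightarrow> bool" where
  "is_state sc st \<phi> \<longleftrightarrow>
     (\<forall>a b. \<phi> (a + b) = \<phi> a + \<phi> b) \<and>
     (\<forall>c a. \<phi> (sc c a) = c * \<phi> a) \<and>
     (\<forall>a. Im (\<phi> (st a * a)) = 0 \<and> Re (\<phi> (st a * a)) \<ge> 0) \<and>
     \<phi> 1 = 1"

definition phi_norm :: "('a::ring_1 \<Rightarrow> 'a) \<Rightarrow> ('a \<Rightarrow> complex) \<Rightarrow> 'a \<Rightarrow> real" where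
  "phi_norm st \<phi> a = sqrt (Re (\<phi> (st a * a)))"

definition star_dynamical_system ::
  "(complex \<Rightarrow> 'a::ring_1 \<Rightarrow> 'a) \<Rightarrow> ('a \<Rightarrow> 'a) \<Rightarrow> ('a \<Rightarrow> complex) \<Rightarrow> ('a \<Rightarrow> 'a) \<Rightarrow> bool" where
  "star_dynamical_system sc st \<phi> \<tau> \<longleftrightarrow>
     unital_star_algebra sc st \<and> is_state sc st \<phi> \<and>
     (\<forall>a b. \<tau> (a + b) = \<tau> a + \<tau> b) \<and>
     (\<forall>c a. \<tau> (sc c a) = sc c (\<tau> a)) \<and>
     \<tau> 1 = 1 \<and>
     (\<forall>a. Re (\<phi> (st (\<tau> a) * \<tau> a)) \<le> Re (\<phi> (st a * a)))"

definition ergodic ::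
  "(complex \<Rightarrow> 'a::ring_1 \<Rightarrow> 'a) \<Rightarrow> ('a \<Rightarrow> 'a) \<Rightarrow> ('a \<Rightarrow> complex) \<Rightarrow> ('a \<Rightarrow> 'a) \<Rightarrow> bool" where
  "ergodic sc st \<phi> \<tau> \<longleftrightarrow>
     star_dynamical_system sc st \<phi> \<tau> \<and>
     (\<forall>As :: nat \<Rightarrow> 'a.
        ((\<lambda>n. phi_norm st \<phi> (\<tau> (As n) - As n)) \<longlonglongrightarrow> 0) \<and>
        (\<forall>e>0. \<exists>N. \<forall>m n. m > N \<and> n > N \<longrightarrow> phi_norm st \<phi> (As m - As n) \<le> e)
        \<longrightarrow> (\<exists>\<alpha>::complex. (\<lambda>n. phi_norm st \<phi> (As n - sc \<alpha> 1)) \<longlonglongrightarrow> 0))"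

definition relatively_dense :: "nat set \<Rightarrow> bool" where
  "relatively_dense E \<longleftrightarrow> (\<exists>n\<ge>1. \<forall>j\<ge>1. E \<inter> {j..<j+n} \<noteq> {})"

end

theory Submission
  imports Defs
begin

lemma additive_diff:
  fixes f :: "'a::ab_group_add \<Rightarrow> 'b::ab_group_add"
  assumes "\<forall>a b. f (a + b) = f a + f b"
  shows "f 0 = 0" "f (- a) = - f a" "f (a - b) = f a - f b"
proof -
  show z: "f 0 = 0" using assms by (metis add.right_neutral add_left_cancel)
  show n: "f (- a) = - f a"
  proof -
    have "f a + f (- a) = 0" using assms z by (metis add.right_inverse)
    thus ?thesis by (simp add: eq_neg_iff_add_eq_0 add.commute)
  qed
  have "f (a - b) = f (a + - b)" by simp
  also have "\<dots> = f a + f (- b)" using assms by blast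
  also have "\<dots> = f a - f b" using assms z by (metis add.right_inverse add_eq_0_iff diff_conv_add_uminus)
  finally show "f (a - b) = f a - f b" .
qed

lemma avg_le_max: "(x::real) \<le> a \<Longrightarrow> y \<le> b \<Longrightarrow> (x + y) / 2 \<le> max a b"
  by (simp add: max_def)

locale sds =
  fixes sc :: "complex \<Rightarrow> 'a::ring_1 \<Rightarrow> 'a" and st :: "'a \<Rightarrow> 'a"
    and \<phi> :: "'a \<Rightarrow> complex" and \<tau> :: "'a \<Rightarrow> 'a"
  assumes sds: "star_dynamical_system sc st \<phi> \<tau>"
begin

lemma vs: "Vector_Spaces.vector_space sc"
  using sds by (simp add: star_dynamical_system_def unital_star_algebra_def)

sublocale V: Vector_Spaces.vector_space sc by (rule vs)

lemma sc_ml: "sc c (a * b) = sc c a * b" and sc_mr: "sc c (a * b) = a * sc c b"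
  and st_st[simp]: "st (st a) = a" and st_add: "st (a + b) = st a + st b"
  and st_sc[simp]: "st (sc c a) = sc (cnj c) (st a)" and st_mult[simp]: "st (a * b) = st b * st a"
  and phi_add: "\<phi> (a + b) = \<phi> a + \<phi> b" and phi_sc[simp]: "\<phi> (sc c a) = c * \<phi> a"
  and phi_pos: "Im (\<phi> (st a * a)) = 0" "Re (\<phi> (st a * a)) \<ge> 0"
  and phi_1[simp]: "\<phi> 1 = 1"
  and tau_add: "\<tau> (a + b) = \<tau> a + \<tau> b" and tau_sc[simp]: "\<tau> (sc c a) = sc c (\<tau> a)"
  and tau_1[simp]: "\<tau> 1 = 1"
  and tau_contr: "Re (\<phi> (st (\<tau> a) * \<tau> a)) \<le> Re (\<phi> (st a * a))"
  using sds by (auto simp: star_dynamical_system_def unital_star_algebra_def is_state_def)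

lemma st_diff[simp]: "st (a - b) = st a - st b" and st_neg[simp]: "st (- a) = - st a"
  and st_0[simp]: "st 0 = 0" and st_add'[simp]: "st (a + b) = st a + st b"
  using additive_diff[of st] st_add by auto
lemma phi_diff[simp]: "\<phi> (a - b) = \<phi> a - \<phi> b" and phi_neg[simp]: "\<phi> (- a) = - \<phi> a"
  and phi_0[simp]: "\<phi> 0 = 0" and phi_add'[simp]: "\<phi> (a + b) = \<phi> a + \<phi> b"
  using additive_diff[of \<phi>] phi_add by auto
lemma tau_diff[simp]: "\<tau> (a - b) = \<tau> a - \<tau> b" and tau_neg[simp]: "\<tau> (- a) = - \<tau> a"
  and tau_0[simp]: "\<tau> 0 = 0" and tau_add'[simp]: "\<tau> (a + b) = \<tau> a + \<tau> b"
  using additive_diff[of \<tau>] tau_add by auto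

lemma st_1[simp]: "st 1 = 1"
  using st_mult[of "st 1" 1] by (simp only: st_st mult_1_right mult_1_left)

lemma taun_add[simp]: "(\<tau> ^^ k) (a + b) = (\<tau> ^^ k) a + (\<tau> ^^ k) b"
  by (induction k) auto
lemma taun_diff[simp]: "(\<tau> ^^ k) (a - b) = (\<tau> ^^ k) a - (\<tau> ^^ k) b"
  by (induction k) auto
lemma taun_sc[simp]: "(\<tau> ^^ k) (sc c a) = sc c ((\<tau> ^^ k) a)"
  by (induction k) auto
lemma taun_1[simp]: "(\<tau> ^^ k) 1 = 1"
  by (induction k) auto

definition ip where "ip a b = \<phi> (st a * b)"
definition q where "q a = Re (\<phi> (st a * a))"

lemma ip_add1[simp]: "ip (a + b) c = ip a c + ip b c"
  and ip_add2[simp]: "ip a (b + c) = ip a b + ip a c"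
  and ip_diff1[simp]: "ip (a - b) c = ip a c - ip b c"
  and ip_diff2[simp]: "ip a (b - c) = ip a b - ip a c"
  and ip_sc1[simp]: "ip (sc k a) b = cnj k * ip a b"
  and ip_sc2[simp]: "ip a (sc k b) = k * ip a b"
  by (simp_all add: ip_def algebra_simps flip: sc_ml sc_mr)

lemma ip_self: "ip a a = complex_of_real (q a)" and q_nonneg: "q a \<ge> 0"
  using phi_pos[of a] by (auto simp: ip_def q_def complex_eq_iff)

lemma ip_herm: "ip b a = cnj (ip a b)"
proof -
  have e1: "ip (a + b) (a + b) = ip a a + ip b b + (ip a b + ip b a)" by simp
  have "Im (ip (a + b) (a + b)) = 0" "Im (ip a a) = 0" "Im (ip b b) = 0" by (simp_all only: ip_self Im_complex_of_real)
  hence 1: "Im (ip a b + ip b a) = 0" using e1 by simp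
  have e2: "ip (a + sc \<i> b) (a + sc \<i> b) = ip a a + ip b b + \<i> * (ip a b - ip b a)"
    by (simp add: algebra_simps)
  have "Im (ip (a + sc \<i> b) (a + sc \<i> b)) = 0" by (simp only: ip_self Im_complex_of_real)
  hence 2: "Re (ip a b - ip b a) = 0" using e2 \<open>Im (ip a a) = 0\<close> \<open>Im (ip b b) = 0\<close> by simp
  have h1: "Im (ip a b) + Im (ip b a) = 0" using 1 by (simp only: plus_complex.sel)
  have h2: "Re (ip a b) - Re (ip b a) = 0" using 2 by (simp only: minus_complex.sel)
  have "Re (cnj (ip a b)) = Re (ip a b)" "Im (cnj (ip a b)) = - Im (ip a b)" by simp_all
  thus ?thesis using h1 h2 by (intro complex_eqI) linarith+
qed

lemma q_add: "q (a + b) = q a + q b + 2 * Re (ip a b)"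
proof -
  have e1: "ip (a + b) (a + b) = ip a a + ip b b + (ip a b + ip b a)" by simp
  have "complex_of_real (q (a + b)) = ip (a+b) (a+b)" by (simp only: ip_self)
  also have "\<dots> = complex_of_real (q a) + complex_of_real (q b) + (ip a b + ip b a)" by (simp only: e1) (simp only: ip_self)
  also have "ip b a = cnj (ip a b)" by (rule ip_herm)
  also have "ip a b + cnj (ip a b) = complex_of_real (2 * Re (ip a b))" by (rule complex_add_cnj)
  finally show ?thesis by (metis of_real_add of_real_eq_iff)
qed

lemma q_sc: "q (sc k a) = (cmod k)^2 * q a"
proof -
  have "complex_of_real (q (sc k a)) = ip (sc k a) (sc k a)" by (simp only: ip_self)
  also have "\<dots> = cnj k * (k * ip a a)" using ip_sc1[of k a "sc k a"] ip_sc2[of a k a] by simp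
  also have "\<dots> = cnj k * (k * q a)" by (simp only: ip_self)
  also have "\<dots> = complex_of_real ((cmod k)^2) * q a" by (metis complex_norm_square mult.assoc mult.commute)
  finally show ?thesis by (metis of_real_eq_iff of_real_mult)
qed

lemma q_lin: "q (a + sc (- (of_real s * cnj (ip a b))) b) = q a + s^2 * (cmod (ip a b))^2 * q b - 2 * s * (cmod (ip a b))^2"
proof -
  have r: "Re (- (of_real s * cnj z) * z) = - s * (cmod z)^2" for z
    unfolding cmod_power2 by (simp add: algebra_simps power2_eq_square)
  have "cmod (- (of_real s * cnj (ip a b))) ^ 2 = s^2 * (cmod (ip a b))^2"
    by (simp add: norm_mult power_mult_distrib)
  moreover have "q (a + sc (- (of_real s * cnj (ip a b))) b) = q a + (cmod (- (of_real s * cnj (ip a b))))^2 * q b + 2 * Re (- (of_real s * cnj (ip a b)) * ip a b)"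
    by (simp only: q_add q_sc ip_sc2)
  ultimately show ?thesis using r[of "ip a b"] by simp
qed

lemma cs: "(cmod (ip a b))^2 \<le> q a * q b"
proof (cases "q b = 0")
  case True
  show ?thesis
  proof (rule ccontr)
    assume "\<not> ?thesis"
    hence pos: "(cmod (ip a b))^2 > 0" using True by simp
    define s where "s = (q a + 1) / (2 * (cmod (ip a b))^2)"
    have "0 \<le> q a + s^2 * (cmod (ip a b))^2 * q b - 2 * s * (cmod (ip a b))^2"
      using q_nonneg q_lin by metis
    also have "\<dots> = q a - (q a + 1)" using True pos by (simp add: s_def field_simps)
    finally show False by simp
  qed
next
  case False
  hence pos: "q b > 0" using q_nonneg[of b] by simp
  define s where "s = 1 / q b"
  have "0 \<le> q a + s^2 * (cmod (ip a b))^2 * q b - 2 * s * (cmod (ip a b))^2"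
    using q_nonneg q_lin by metis
  also have "\<dots> = q a - (cmod (ip a b))^2 / q b" using pos by (simp add: s_def power2_eq_square field_simps)
  finally show ?thesis using pos by (simp add: field_simps)
qed

lemma cs': "cmod (ip a b) \<le> sqrt (q a) * sqrt (q b)"
  using cs[of a b] q_nonneg[of a] q_nonneg[of b]
  by (metis norm_ge_zero real_le_rsqrt real_sqrt_mult)

lemma q_1[simp]: "q 1 = 1" by (simp add: q_def)
lemma ip_1[simp]: "ip 1 y = \<phi> y" by (simp add: ip_def)

lemma q_tau: "q (\<tau> a) \<le> q a" using tau_contr by (simp add: q_def)

lemma phi_tau[simp]: "\<phi> (\<tau> x) = \<phi> x"
proof (rule ccontr)
  assume ne: "\<phi> (\<tau> x) \<noteq> \<phi> x"
  define w where "w = \<phi> (\<tau> x) - \<phi> x"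
  define K where "K = q x - q (\<tau> x)"
  have K0: "K \<ge> 0" using q_tau[of x] by (simp add: K_def)
  have wpos: "(cmod w)^2 > 0" using ne by (simp add: w_def)
  define s where "s = 1 / (K + 1)"
  have spos: "s > 0" using K0 by (simp add: s_def)
  define t where "t = of_real s * cnj w"
  have qe: "q (1 + sc t y) = 1 + (cmod t)^2 * q y + 2 * Re (t * \<phi> y)" for y
    by (simp add: q_add q_sc)
  have "q (\<tau> (1 + sc t x)) \<le> q (1 + sc t x)" by (rule q_tau)
  hence "2 * Re (t * w) \<le> (cmod t)^2 * K"
    by (simp add: qe w_def K_def algebra_simps)
  moreover have "Re (t * w) = s * (cmod w)^2" unfolding cmod_power2 by (simp add: t_def algebra_simps power2_eq_square)
  moreover have "(cmod t)^2 = s^2 * (cmod w)^2" by (simp add: t_def norm_mult power_mult_distrib)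
  ultimately have "2 * s * (cmod w)^2 \<le> s^2 * (cmod w)^2 * K" by simp
  hence "(s * (cmod w)^2) * 2 \<le> (s * (cmod w)^2) * (s * K)" by (simp add: power2_eq_square algebra_simps)
  hence "2 \<le> s * K" using wpos spos by (meson mult_left_le_imp_le mult_pos_pos)
  moreover have "s * K < 1" using K0 by (simp add: s_def)
  ultimately show False by simp
qed

lemma phi_taun[simp]: "\<phi> ((\<tau> ^^ k) x) = \<phi> x"
  by (induction k) auto

lemma q_taun: "q ((\<tau> ^^ k) a) \<le> q a"
proof (induction k)
  case (Suc k)
  have "q ((\<tau> ^^ Suc k) a) = q (\<tau> ((\<tau> ^^ k) a))" by simp
  also have "\<dots> \<le> q ((\<tau> ^^ k) a)" by (rule q_tau)
  finally show ?case using Suc by linarith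
qed simp

inductive Cn :: "'a \<Rightarrow> nat \<Rightarrow> 'a \<Rightarrow> bool" for B where
  base: "1 \<le> k \<Longrightarrow> k \<le> n \<Longrightarrow> Cn B n ((\<tau> ^^ k) B)"
| mid: "Cn B n X \<Longrightarrow> Cn B n Y \<Longrightarrow> Cn B n (sc (1/2) (X + Y))"

lemma Cn_phi: "Cn B n X \<Longrightarrow> \<phi> X = \<phi> B"
  by (induction rule: Cn.induct) (auto simp: field_simps)

lemma Cn_tau: "Cn B n X \<Longrightarrow> Cn B (Suc n) (\<tau> X)"
proof (induction rule: Cn.induct)
  case (base k n)
  have "Cn B (Suc n) ((\<tau> ^^ Suc k) B)" using base by (intro Cn.base) auto
  thus ?case by simp
next
  case (mid n X Y)
  thus ?case using Cn.mid by fastforce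
qed

lemma Cn_window:
  "Cn B n X \<Longrightarrow> \<exists>k. 1 \<le> k \<and> k \<le> n \<and> cmod (\<phi> (A * (\<tau> ^^ j) X)) \<le> cmod (\<phi> (A * (\<tau> ^^ (k + j)) B))"
proof (induction rule: Cn.induct)
  case (base k n)
  have "(\<tau> ^^ j) ((\<tau> ^^ k) B) = (\<tau> ^^ (k + j)) B" by (simp add: funpow_add add.commute)
  thus ?case using base by auto
next
  case (mid n X Y)
  obtain k1 where k1: "1 \<le> k1" "k1 \<le> n" "cmod (\<phi> (A * (\<tau> ^^ j) X)) \<le> cmod (\<phi> (A * (\<tau> ^^ (k1 + j)) B))"
    using mid by blast
  obtain k2 where k2: "1 \<le> k2" "k2 \<le> n" "cmod (\<phi> (A * (\<tau> ^^ j) Y)) \<le> cmod (\<phi> (A * (\<tau> ^^ (k2 + j)) B))"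
    using mid by blast
  have e: "\<phi> (A * (\<tau> ^^ j) (sc (1/2) (X + Y))) = (\<phi> (A * (\<tau> ^^ j) X) + \<phi> (A * (\<tau> ^^ j) Y)) / 2"
    by (simp add: distrib_left flip: sc_mr)
  have "cmod (\<phi> (A * (\<tau> ^^ j) (sc (1/2) (X + Y)))) \<le> (cmod (\<phi> (A * (\<tau> ^^ j) X)) + cmod (\<phi> (A * (\<tau> ^^ j) Y))) / 2"
    unfolding e by (simp add: norm_triangle_ineq)
  also have "\<dots> \<le> max (cmod (\<phi> (A * (\<tau> ^^ (k1 + j)) B))) (cmod (\<phi> (A * (\<tau> ^^ (k2 + j)) B)))"
    using k1(3) k2(3) by (rule avg_le_max)
  finally show ?case using k1 k2 by (auto simp: max_def split: if_splits)
qed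

lemma parallelogram: "q (X - Y) = 2 * q X + 2 * q Y - 4 * q (sc (1/2) (X + Y))"
proof -
  have "q (X+Y) + q (X-Y) = Re (ip (X+Y) (X+Y)) + Re (ip (X-Y) (X-Y))"
    by (simp only: ip_self Re_complex_of_real)
  also have "\<dots> = 2 * Re (ip X X) + 2 * Re (ip Y Y)" by simp
  also have "\<dots> = 2 * q X + 2 * q Y" by (simp only: ip_self Re_complex_of_real)
  finally have "q (X+Y) + q (X-Y) = 2 * q X + 2 * q Y" .
  moreover have "q (sc (1/2) (X + Y)) = q (X + Y) / 4" by (simp add: q_sc power2_eq_square)
  ultimately show ?thesis by simp
qed

lemma phi_bound: "cmod (\<phi> Z) \<le> sqrt (q Z)"
  using cs'[of 1 Z] by simp

lemma main:
  assumes erg: "\<forall>As :: nat \<Rightarrow> 'a.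
        ((\<lambda>n. phi_norm st \<phi> (\<tau> (As n) - As n)) \<longlonglongrightarrow> 0) \<and>
        (\<forall>e>0. \<exists>N. \<forall>m n. m > N \<and> n > N \<longrightarrow> phi_norm st \<phi> (As m - As n) \<le> e)
        \<longrightarrow> (\<exists>\<alpha>::complex. (\<lambda>n. phi_norm st \<phi> (As n - sc \<alpha> 1)) \<longlonglongrightarrow> 0)"
    and eps: "\<epsilon> > 0"
  shows "relatively_dense
           {k::nat. k \<ge> 1 \<and> cmod (\<phi> (A * (\<tau> ^^ k) B)) > cmod (\<phi> A * \<phi> B) - \<epsilon>}"
proof -
  have pn: "phi_norm st \<phi> a = sqrt (q a)" for a by (simp add: phi_norm_def q_def)
  define S where "S = q ` {X. \<exists>n. Cn B n X}"
  define D where "D = Inf S"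
  have Sne: "S \<noteq> {}" using Cn.base[of 1 1 B] by (auto simp: S_def)
  have Sbdd: "bdd_below S" unfolding S_def by (rule bdd_belowI[of _ 0]) (auto simp: q_nonneg)
  have Dle: "D \<le> q X" if "Cn B n X" for n X
    unfolding D_def using Sbdd that by (intro cInf_lower) (auto simp: S_def)
  have "\<exists>X. (\<exists>n. Cn B n X) \<and> q X < D + inverse (real (Suc m))" for m
  proof -
    have "Inf S < D + inverse (real (Suc m))" by (simp add: D_def)
    then obtain x where "x \<in> S" "x < D + inverse (real (Suc m))"
      using cInf_less_iff[OF Sne Sbdd] by blast
    thus ?thesis by (auto simp: S_def)
  qed
  then obtain Y where YC: "\<And>m. \<exists>n. Cn B n (Y m)" and Yq: "\<And>m. q (Y m) < D + inverse (real (Suc m))"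
    by metis
  have pmid: "q (X - Z) \<le> 2 * q X + 2 * q Z - 4 * D" if "Cn B n X" "Cn B n' Z" for n n' X Z
  proof -
    have "Cn B (max n n') X"
      using that(1) by (induction rule: Cn.induct) (auto intro: Cn.intros)
    moreover have "Cn B (max n n') Z"
      using that(2) by (induction rule: Cn.induct) (auto intro: Cn.intros)
    ultimately have "D \<le> q (sc (1/2) (X + Z))" by (intro Dle) (rule Cn.mid)
    thus ?thesis using parallelogram[of X Z] by simp
  qed
  have tauY: "q (\<tau> (Y m) - Y m) \<le> 4 * inverse (real (Suc m))" for m
  proof -
    obtain n where n: "Cn B n (Y m)" using YC by blast
    have "q (\<tau> (Y m) - Y m) \<le> 2 * q (\<tau> (Y m)) + 2 * q (Y m) - 4 * D"
      by (rule pmid[OF Cn_tau[OF n] n])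
    thus ?thesis using q_tau[of "Y m"] Yq[of m] by simp
  qed
  have lim0: "(\<lambda>m. sqrt (4 * inverse (real (Suc m)))) \<longlonglongrightarrow> 0"
    using tendsto_real_sqrt[OF tendsto_mult_right_zero[OF LIMSEQ_inverse_real_of_nat, of 4]] by simp
  have c1: "(\<lambda>n. phi_norm st \<phi> (\<tau> (Y n) - Y n)) \<longlonglongrightarrow> 0"
    unfolding pn
  proof (rule tendsto_sandwich[OF _ _ tendsto_const lim0])
    show "\<forall>\<^sub>F n in sequentially. 0 \<le> sqrt (q (\<tau> (Y n) - Y n))" by (simp add: q_nonneg)
    have "\<forall>n. sqrt (q (\<tau> (Y n) - Y n)) \<le> sqrt (4 * inverse (real (Suc n)))"
      using tauY real_sqrt_le_mono by blast
    thus "\<forall>\<^sub>F n in sequentially. sqrt (q (\<tau> (Y n) - Y n)) \<le> sqrt (4 * inverse (real (Suc n)))"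
      by (rule always_eventually)
  qed
  have c2: "\<forall>e>0. \<exists>N. \<forall>m n. m > N \<and> n > N \<longrightarrow> phi_norm st \<phi> (Y m - Y n) \<le> e"
  proof (intro allI impI)
    fix e :: real assume e: "e > 0"
    obtain N where N: "4 / e^2 < real N" using reals_Archimedean2 by blast
    have Npos: "N > 0" using N e by (metis divide_pos_pos of_nat_0 order.asym neq0_conv zero_less_numeral zero_less_power)
    have "\<forall>m n. m > N \<and> n > N \<longrightarrow> sqrt (q (Y m - Y n)) \<le> e"
    proof (intro allI impI)
      fix m n assume mn: "m > N \<and> n > N"
      obtain a b where ab: "Cn B a (Y m)" "Cn B b (Y n)" using YC by metis
      have "q (Y m - Y n) \<le> 2 * inverse (real (Suc m)) + 2 * inverse (real (Suc n))"
        using pmid[OF ab] Yq[of m] Yq[of n] by simp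
      also have "\<dots> \<le> 2 * inverse (real N) + 2 * inverse (real N)"
        using mn N e Npos by (intro add_mono mult_left_mono le_imp_inverse_le) (auto simp: field_simps)
      also have "\<dots> = 4 / real N" by (simp add: field_simps)
      also have "\<dots> \<le> e^2"
      proof -
        have "4 < real N * e^2" using N e by (simp add: divide_less_eq)
        thus ?thesis using Npos by (simp add: divide_le_eq mult.commute)
      qed
      finally show "sqrt (q (Y m - Y n)) \<le> e" using e by (simp add: real_sqrt_le_iff real_le_lsqrt)
    qed
    thus "\<exists>N. \<forall>m n. m > N \<and> n > N \<longrightarrow> phi_norm st \<phi> (Y m - Y n) \<le> e" unfolding pn by blast
  qed
  obtain \<alpha> where al: "(\<lambda>n. sqrt (q (Y n - sc \<alpha> 1))) \<longlonglongrightarrow> 0"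
    using erg c1 c2 unfolding pn by blast
  have phiY: "\<phi> (Y n) = \<phi> B" for n using YC Cn_phi by blast
  have "\<alpha> = \<phi> B"
  proof (rule ccontr)
    assume "\<alpha> \<noteq> \<phi> B"
    hence "cmod (\<phi> B - \<alpha>) > 0" by simp
    from order_tendstoD(2)[OF al this] obtain n where "sqrt (q (Y n - sc \<alpha> 1)) < cmod (\<phi> B - \<alpha>)"
      by (auto simp: eventually_sequentially)
    moreover have "cmod (\<phi> B - \<alpha>) \<le> sqrt (q (Y n - sc \<alpha> 1))"
      using phi_bound[of "Y n - sc \<alpha> 1"] by (simp add: phiY)
    ultimately show False by simp
  qed
  define \<delta> where "\<delta> = \<epsilon> / (sqrt (q (st A)) + 1)"
  have dpos: "\<delta> > 0" using eps q_nonneg[of "st A"] by (simp add: \<delta>_def add_nonneg_pos)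
  from order_tendstoD(2)[OF al dpos] obtain n0 where n0: "sqrt (q (Y n0 - sc (\<phi> B) 1)) < \<delta>"
    by (auto simp: eventually_sequentially \<open>\<alpha> = \<phi> B\<close>)
  obtain N where CN: "Cn B N (Y n0)" using YC by blast
  define X where "X = Y n0"
  have key: "cmod (\<phi> (A * (\<tau> ^^ j) X)) > cmod (\<phi> A * \<phi> B) - \<epsilon>" for j
  proof -
    define Z where "Z = (\<tau> ^^ j) X - sc (\<phi> B) 1"
    have "Z = (\<tau> ^^ j) (X - sc (\<phi> B) 1)" by (simp add: Z_def)
    hence "q Z \<le> q (X - sc (\<phi> B) 1)" using q_taun[of j "X - sc (\<phi> B) 1"] by (simp only:)
    hence "sqrt (q Z) \<le> sqrt (q (X - sc (\<phi> B) 1))" by (rule real_sqrt_le_mono)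
    hence qZ: "sqrt (q Z) < \<delta>" using n0 unfolding X_def by linarith
    have e0: "\<phi> (A * (\<tau> ^^ j) X) = \<phi> (A * Z) + \<phi> A * \<phi> B"
      by (simp add: Z_def distrib_left algebra_simps flip: sc_mr)
    moreover have "cmod (\<phi> (A * Z)) < \<epsilon>"
    proof -
      have "cmod (\<phi> (A * Z)) = cmod (ip (st A) Z)" by (simp add: ip_def)
      also have "\<dots> \<le> sqrt (q (st A)) * sqrt (q Z)" by (rule cs')
      also have "\<dots> \<le> sqrt (q (st A)) * \<delta>" using qZ by (intro mult_left_mono) (auto simp: q_nonneg)
      also have "\<dots> < (sqrt (q (st A)) + 1) * \<delta>" using dpos by (simp add: algebra_simps)
      also have "\<dots> = \<epsilon>"
      proof -
        have "sqrt (q (st A)) + 1 > 0" using q_nonneg[of "st A"] by (simp add: add_nonneg_pos)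
        thus ?thesis by (simp add: \<delta>_def)
      qed
      finally show ?thesis .
    qed
    moreover have "cmod (\<phi> A * \<phi> B) \<le> cmod (\<phi> (A * Z) + \<phi> A * \<phi> B) + cmod (\<phi> (A * Z))"
      using norm_triangle_ineq4[of "\<phi> (A * Z) + \<phi> A * \<phi> B" "\<phi> (A * Z)"] by simp
    ultimately show ?thesis unfolding e0 by linarith
  qed
  show ?thesis unfolding relatively_dense_def
  proof (intro exI[of _ N] conjI allI impI)
    obtain k where "1 \<le> k" "k \<le> N" using Cn_window[OF CN, of A 0] by blast
    thus "1 \<le> N" by simp
  next
    fix j :: nat assume j: "1 \<le> j"
    obtain k where k: "1 \<le> k" "k \<le> N" "cmod (\<phi> (A * (\<tau> ^^ (j - 1)) X)) \<le> cmod (\<phi> (A * (\<tau> ^^ (k + (j - 1))) B))"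
      using Cn_window[OF CN, of A "j - 1"] X_def by blast
    have "k + (j - 1) \<in> {k::nat. k \<ge> 1 \<and> cmod (\<phi> (A * (\<tau> ^^ k) B)) > cmod (\<phi> A * \<phi> B) - \<epsilon>}"
      using k key[of "j - 1"] j by auto
    moreover have "k + (j - 1) \<in> {j..<j+N}" using k j by auto
    ultimately show "{k::nat. k \<ge> 1 \<and> cmod (\<phi> (A * (\<tau> ^^ k) B)) > cmod (\<phi> A * \<phi> B) - \<epsilon>} \<inter> {j..<j+N} \<noteq> {}"
      by blast
  qed
qed

end

theorem theorem4p2:
  fixes sc :: "complex \<Rightarrow> 'a::ring_1 \<Rightarrow> 'a" and st :: "'a \<Rightarrow> 'a"
    and \<phi> :: "'a \<Rightarrow> complex" and \<tau> :: "'a \<Rightarrow> 'a"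
    and A B :: 'a and \<epsilon> :: real
  assumes "ergodic sc st \<phi> \<tau>" and "\<epsilon> > 0"
  shows "relatively_dense
           {k::nat. k \<ge> 1 \<and> cmod (\<phi> (A * (\<tau> ^^ k) B)) > cmod (\<phi> A * \<phi> B) - \<epsilon>}"
proof -
  interpret sds sc st \<phi> \<tau> using assms(1) by (unfold_locales) (simp add: ergodic_def)
  show ?thesis using main assms by (simp add: ergodic_def)
qed

end
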